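(* Let $\ell\ge 2$, $A\ge 2$ and $H\ge \ell+1$ be integers. There exists an episodic tabular MDP with $A$ actions, horizon $H$, at most $S\le 1+A^{\ell}$ states and deterministic transitions, together with a fixed initial state $s_1$, such that every fixed batching policy (for any batching horizon $B\in\{1,\dots,\ell\}$) collects an expected cumulative reward of at most $A^{-\ell/2+1}$ from $s_1$, whereas the optimal value achievable by $\ell$-step lookahead policies from $s_1$ is larger than $1/2$.
   Context: An episodic tabular MDP has finite state space $\mathcal{S}$ ($|\mathcal{S}|=S$), finite action space $\mathcal{A}$ ($|\mathcal{A}|=A$), horizon $H$, reward distributions $\mathcal{R}_h(s,a)$ supported in $[0,1]$ and transition kernels $P_h(\cdot\mid s,a)$; rewards and transitions are independent across time steps but may be arbitrarily correlated across states and actions within a step. The value of a policy is its expected cumulative reward $\mathbb{E}[\sum_{t=1}^H R_t]$. The $\ell$-step lookahead information at step $h$ in state $s$ consists of the realized rewards and next states along all trajectories from $s$ over steps $h,\dots,h+\ell_h-1$ under every deterministic Markov policy (equivalently, the realized reward and next state of every state-action pair reachable from $s$ at each of these steps), where $\ell_h=\min\{\ell,H-h+1\}$; realizations are consistent across trajectories. An $\ell$-step lookahead policy chooses $a_h$ as a function of $s_h$ and the $\ell$-step lookahead information observed at step $h$ (and the history). A fixed batching policy with batching horizon $B\le \ell$ only observes lookahead information at the predefined steps $nB+1$ ($n=0,1,\dots$): at step $nB+1$ it observes the $B$-step lookahead information from $s_{nB+1}$, and for all steps $h\in\{nB+1,\dots,(n+1)B\}$ its action depends only on $s_h$ and this information.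 *)

theory Defs
  imports "HOL-Probability.Probability"
begin

(* Conventions: states are 0..<S, actions 0..<A, time steps are 0-based: 0..<H
   (step h here = step h+1 of the paper).
   Deterministic transitions: P h s a = next state.
   Reward randomness: a realization w :: nat => nat => nat => real, w h s a = reward of (s,a) at step h.
   The reward vector of step h is drawn from the joint distribution D h (arbitrary correlation
   across state-action pairs); different steps are independent (product pmf). *)

type_synonym rew_real = "nat \<Rightarrow> nat \<Rightarrow> nat \<Rightarrow> real"
type_synonym info = "nat \<Rightarrow> nat \<Rightarrow> nat \<Rightarrow> real option"

definition det_mdp ::
  "nat \<Rightarrow> nat \<Rightarrow> nat \<Rightarrow> (nat \<Rightarrow> nat \<Rightarrow> nat \<Rightarrow> nat) \<Rightarrow> (nat \<Rightarrow> (nat \<Rightarrow> nat \<Rightarrow> real) pmf) \<Rightarrow> bool"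
  where "det_mdp S A H P D \<longleftrightarrow>
     (\<forall>h<H. \<forall>s<S. \<forall>a<A. P h s a < S) \<and>
     (\<forall>h<H. \<forall>r\<in>set_pmf (D h). \<forall>s<S. \<forall>a<A. 0 \<le> r s a \<and> r s a \<le> 1)"

definition rew_pmf :: "nat \<Rightarrow> (nat \<Rightarrow> (nat \<Rightarrow> nat \<Rightarrow> real) pmf) \<Rightarrow> rew_real pmf"
  where "rew_pmf H D = Pi_pmf {..<H} (\<lambda>_ _. 0) D"

fun reach :: "nat \<Rightarrow> (nat \<Rightarrow> nat \<Rightarrow> nat \<Rightarrow> nat) \<Rightarrow> nat \<Rightarrow> nat \<Rightarrow> nat \<Rightarrow> nat set" where
  "reach A P h s 0 = {s}"
| "reach A P h s (Suc k) = {P (h + k) s' a | s' a. s' \<in> reach A P h s k \<and> a < A}"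

(* L-step lookahead information observed at step h in state s (window truncated at horizon):
   realized rewards of all pairs (s',a) reachable from s at steps h..min(h+L,H)-1.
   Next states are deterministic and known, hence not recorded separately. *)
definition lookahead_info :: "nat \<Rightarrow> nat \<Rightarrow> (nat \<Rightarrow> nat \<Rightarrow> nat \<Rightarrow> nat) \<Rightarrow> nat \<Rightarrow> nat \<Rightarrow> nat \<Rightarrow> rew_real \<Rightarrow> info"
  where "lookahead_info A H P h s L w = (\<lambda>t s' a.
     if h \<le> t \<and> t < min (h + L) H \<and> s' \<in> reach A P h s (t - h) \<and> a < A
     then Some (w t s' a) else None)"

(* trajectory of states at steps 0..h under a decision rule d (d h xs = action at step h
   given the list xs of states at steps 0..h) *)
primrec traj :: "nat \<Rightarrow> (nat \<Rightarrow> nat list \<Rightarrow> nat) \<Rightarrow> (nat \<Rightarrow> nat \<Rightarrow> nat \<Rightarrow> nat) \<Rightarrow> nat \<Rightarrow> nat list" where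
  "traj s1 d P 0 = [s1]"
| "traj s1 d P (Suc h) = traj s1 d P h @ [P h (last (traj s1 d P h)) (d h (traj s1 d P h))]"

definition cum_reward :: "nat \<Rightarrow> (nat \<Rightarrow> nat \<Rightarrow> nat \<Rightarrow> nat) \<Rightarrow> nat \<Rightarrow> (nat \<Rightarrow> nat list \<Rightarrow> nat) \<Rightarrow> rew_real \<Rightarrow> real"
  where "cum_reward H P s1 d w = (\<Sum>h<H. w h (traj s1 d P h ! h) (d h (traj s1 d P h)))"

(* fixed batching policy pol h s I with batching horizon B: at step h, I is the B-step lookahead
   information observed at the last batch start (h div B) * B from the state at that step *)
definition batch_rule :: "nat \<Rightarrow> nat \<Rightarrow> (nat \<Rightarrow> nat \<Rightarrow> nat \<Rightarrow> nat) \<Rightarrow> nat \<Rightarrow> (nat \<Rightarrow> nat \<Rightarrow> info \<Rightarrow> nat) \<Rightarrow> rew_real \<Rightarrow> nat \<Rightarrow> nat list \<Rightarrow> nat"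
  where "batch_rule A H P B pol w h xs =
     pol h (xs ! h) (lookahead_info A H P ((h div B) * B) (xs ! ((h div B) * B)) B w)"

definition batch_value :: "nat \<Rightarrow> nat \<Rightarrow> (nat \<Rightarrow> nat \<Rightarrow> nat \<Rightarrow> nat) \<Rightarrow> (nat \<Rightarrow> (nat \<Rightarrow> nat \<Rightarrow> real) pmf) \<Rightarrow> nat \<Rightarrow> nat \<Rightarrow> (nat \<Rightarrow> nat \<Rightarrow> info \<Rightarrow> nat) \<Rightarrow> real"
  where "batch_value A H P D s1 B pol =
     measure_pmf.expectation (rew_pmf H D) (\<lambda>w. cum_reward H P s1 (batch_rule A H P B pol w) w)"

(* l-step lookahead policy pol h s Is: Is = list of lookahead informations observed at steps 0..h
   (the history; past states, actions and realized rewards are determined by it) *)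
definition look_rule :: "nat \<Rightarrow> nat \<Rightarrow> (nat \<Rightarrow> nat \<Rightarrow> nat \<Rightarrow> nat) \<Rightarrow> nat \<Rightarrow> (nat \<Rightarrow> nat \<Rightarrow> info list \<Rightarrow> nat) \<Rightarrow> rew_real \<Rightarrow> nat \<Rightarrow> nat list \<Rightarrow> nat"
  where "look_rule A H P l pol w h xs =
     pol h (xs ! h) (map (\<lambda>t. lookahead_info A H P t (xs ! t) l w) [0..<Suc h])"

definition look_value :: "nat \<Rightarrow> nat \<Rightarrow> (nat \<Rightarrow> nat \<Rightarrow> nat \<Rightarrow> nat) \<Rightarrow> (nat \<Rightarrow> (nat \<Rightarrow> nat \<Rightarrow> real) pmf) \<Rightarrow> nat \<Rightarrow> nat \<Rightarrow> (nat \<Rightarrow> nat \<Rightarrow> info list \<Rightarrow> nat) \<Rightarrow> real"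
  where "look_value A H P D s1 l pol =
     measure_pmf.expectation (rew_pmf H D) (\<lambda>w. cum_reward H P s1 (look_rule A H P l pol w) w)"

end

theory Submission
  imports Defs
begin

lemma length_traj[simp]: "length (traj s1 d P h) = Suc h"
  by (induction h) auto

lemma traj_nth_Suc: "traj s1 d P (Suc h) ! Suc h = P h (traj s1 d P h ! h) (d h (traj s1 d P h))"
proof -
  have "last (traj s1 d P h) = traj s1 d P h ! h"
    by (metis last_conv_nth length_traj diff_Suc_1 list.size(3) nat.simps(3))
  then show ?thesis by (simp add: nth_append)
qed

lemma traj_cong:
  assumes "\<And>j xs. j < h \<Longrightarrow> d j xs = d' j xs"
  shows "traj s1 d P h = traj s1 d' P h"
  using assms by (induction h) auto

lemma traj_reach:
  assumes "\<And>i xs. d i xs < A"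
  shows "traj s1 d P (h + j) ! (h + j) \<in> reach A P h (traj s1 d P h ! h) j"
proof (induction j)
  case 0 then show ?case by simp
next
  case (Suc j)
  have "traj s1 d P (h + Suc j) ! (h + Suc j) =
     P (h + j) (traj s1 d P (h + j) ! (h + j)) (d (h + j) (traj s1 d P (h + j)))"
    using traj_nth_Suc[of s1 d P "h + j"] by simp
  then show ?case using Suc assms by auto
qed

lemma reach_card: "finite (reach A P h s k) \<and> card (reach A P h s k) \<le> A ^ k"
proof (induction k)
  case 0 then show ?case by simp
next
  case (Suc k)
  have eq: "reach A P h s (Suc k) = (\<lambda>(s', a). P (h + k) s' a) ` (reach A P h s k \<times> {..<A})"
    by auto
  have fin: "finite (reach A P h s k \<times> {..<A})" using Suc by auto
  have "card (reach A P h s (Suc k)) \<le> card (reach A P h s k \<times> {..<A})"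
    unfolding eq by (rule card_image_le[OF fin])
  also have "\<dots> = card (reach A P h s k) * A" by (simp add: card_cartesian_product)
  also have "\<dots> \<le> A ^ k * A" using Suc by simp
  finally show ?case using eq fin by (simp add: mult.commute)
qed

lemma sum_single:
  assumes "(l::nat) < H"
  shows "(\<Sum>h<H. if h = l \<and> Q h then (1::real) else 0) = (if Q l then 1 else 0)"
proof -
  have "(\<Sum>h<H. if h = l \<and> Q h then (1::real) else 0) = (\<Sum>h<H. if h = l then (if Q l then 1 else 0) else 0)"
    by (rule sum.cong) auto
  also have "\<dots> = (if Q l then 1 else 0)" using assms by (simp add: sum.delta)
  finally show ?thesis .
qed

lemma div_step:
  fixes k A j :: nat
  shows "k div A ^ Suc j * A + k div A ^ j mod A = k div A ^ j"
proof -
  have "k div A ^ Suc j = (k div A ^ j) div A"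
    by (simp only: power_Suc2 div_mult2_eq)
  then show ?thesis by simp
qed

lemma mod_half:
  fixes l B :: nat
  assumes "1 \<le> B" "B \<le> l"
  shows "2 * (l - l div B * B) \<le> l"
proof (cases "2 * B \<le> l")
  case True
  have "l - l div B * B = l mod B" by (simp add: minus_div_mult_eq_mod)
  also have "\<dots> < B" using assms by simp
  finally show ?thesis using True by linarith
next
  case False
  have "l div B = 1"
  proof -
    have "l div B < 2" using False assms by (simp add: div_less_iff_less_mult)
    moreover have "l div B \<ge> 1" using div_le_mono[of B l B] assms by simp
    ultimately show ?thesis by linarith
  qed
  then show ?thesis using False by simp
qed

theorem claim1:
  fixes l A H :: nat
  assumes "l \<ge> 2" and "A \<ge> 2" and "H \<ge> l + 1"
  shows "\<exists>S P D s1. S \<le> 1 + A ^ l \<and> det_mdp S A H P D \<and> s1 < S \<and>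
     (\<forall>B pol. 1 \<le> B \<and> B \<le> l \<and> (\<forall>h s I. pol h s I < A) \<longrightarrow>
        batch_value A H P D s1 B pol \<le> real A powr (1 - real l / 2)) \<and>
     (\<exists>pol. (\<forall>h s I. pol h s I < A) \<and> look_value A H P D s1 l pol > 1 / 2)"
proof -
  define N where "N = A ^ (l - 1)"
  define P :: "nat \<Rightarrow> nat \<Rightarrow> nat \<Rightarrow> nat" where
    "P = (\<lambda>h s a. if 1 \<le> h \<and> h < l \<and> s * A + a < N then s * A + a else 0)"
  define g :: "nat \<Rightarrow> nat \<Rightarrow> nat \<Rightarrow> real" where "g = (\<lambda>k s a. if s = k then 1 else 0)"
  define D where "D = (\<lambda>h. if h = l then map_pmf g (pmf_of_set {..<N}) else return_pmf (\<lambda>_ _. 0))"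
  define W :: "nat \<Rightarrow> rew_real" where "W = (\<lambda>k h s a. if h = l \<and> s = k then 1 else 0)"
  have Npos: "N \<ge> 1" using assms by (simp add: N_def)
  have lH: "l < H" using assms by simp
  have rew: "rew_pmf H D = map_pmf W (pmf_of_set {..<N})"
  proof -
    have "rew_pmf H D = Pi_pmf {l} (\<lambda>_ _. 0) D"
      unfolding rew_pmf_def by (rule Pi_pmf_subset') (use lH in \<open>auto simp: D_def\<close>)
    also have "\<dots> = map_pmf (\<lambda>a b. if b = l then a else (\<lambda>_ _. 0)) (D l)"
      by (rule Pi_pmf_singleton)
    also have "\<dots> = map_pmf W (pmf_of_set {..<N})"
      by (simp add: D_def map_pmf_comp W_def g_def; rule map_pmf_cong; auto)
    finally show ?thesis .
  qed
  have expect: "measure_pmf.expectation (rew_pmf H D) f = (\<Sum>k<N. f (W k)) / real N" for f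
  proof -
    have ne: "{..<N} \<noteq> {}" using Npos lessThan_iff by (metis empty_iff less_le_trans zero_less_one)
    show ?thesis unfolding rew using integral_pmf_of_set[OF ne] by simp
  qed
  have cum: "cum_reward H P s1 d (W k) = (if traj s1 d P l ! l = k then 1 else 0)" for s1 d k
    unfolding cum_reward_def W_def using sum_single[OF lH] by simp
  have mdp: "det_mdp N A H P D"
    unfolding det_mdp_def using Npos by (auto simp: P_def D_def g_def)
  have batch: "batch_value A H P D 0 B pol \<le> real A powr (1 - real l / 2)"
    if B1: "1 \<le> B" and Bl: "B \<le> l" and polA: "\<forall>h s I. pol h s I < A" for B pol
  proof -
    define ts where "ts = l div B * B"
    define m where "m = l - ts"
    have tsl: "ts \<le> l" by (simp add: ts_def)
    have m2: "2 * m \<le> l" unfolding m_def ts_def by (rule mod_half[OF B1 Bl])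
    let ?r = "\<lambda>k. batch_rule A H P B pol (W k)"
    have same: "?r k j xs = ?r 0 j xs" if "j < ts" for k j xs
    proof -
      have "j div B < l div B" using that B1 unfolding ts_def
        by (metis div_less_iff_less_mult less_le_trans mult_eq_0_iff not_le zero_less_iff_neq_zero
             less_numeral_extra(1) le_less_trans not_one_le_zero)
      then have "Suc (j div B) * B \<le> l div B * B" by (intro mult_le_mono1) simp
      moreover have "l div B * B \<le> l" by simp
      moreover have "j div B * B + B = Suc (j div B) * B" by simp
      ultimately have w: "j div B * B + B \<le> l" by linarith
      have "lookahead_info A H P (j div B * B) s B (W k) = lookahead_info A H P (j div B * B) s B (W 0)" for s
        unfolding lookahead_info_def W_def using w by (intro ext) auto
      then show ?thesis unfolding batch_rule_def by simp
    qed
    have trs: "traj 0 (?r k) P ts = traj 0 (?r 0) P ts" for k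
      by (rule traj_cong, rule same)
    define c where "c = traj 0 (?r 0) P ts ! ts"
    define R where "R = reach A P ts c m"
    have rA: "?r k i xs < A" for k i xs using polA by (simp add: batch_rule_def)
    have inR: "traj 0 (?r k) P l ! l \<in> R" for k
      using traj_reach[of "?r k" A 0 P ts m, OF rA] trs[of k] tsl
      unfolding R_def c_def m_def by simp
    have finR: "finite R" and cardR: "card R \<le> A ^ m" using reach_card unfolding R_def by auto
    have "(\<Sum>k<N. cum_reward H P 0 (?r k) (W k)) = (\<Sum>k<N. if traj 0 (?r k) P l ! l = k then 1 else 0)"
      using cum by simp
    also have "\<dots> \<le> (\<Sum>k<N. if k \<in> R then (1::real) else 0)"
    proof (rule sum_mono)
      fix k show "(if traj 0 (?r k) P l ! l = k then (1::real) else 0) \<le> (if k \<in> R then 1 else 0)"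
        using inR[of k] by auto
    qed
    also have "\<dots> = real (card ({..<N} \<inter> R))"
      by (simp add: sum.If_cases)
    also have "\<dots> \<le> real (card R)" using finR by (simp add: card_mono)
    also have "\<dots> \<le> real A ^ m" using cardR by (metis of_nat_le_iff of_nat_power)
    finally have sumle: "(\<Sum>k<N. cum_reward H P 0 (?r k) (W k)) \<le> real A ^ m" .
    have Ap: "real A > 0" using assms by simp
    have "batch_value A H P D 0 B pol = (\<Sum>k<N. cum_reward H P 0 (?r k) (W k)) / real N"
      unfolding batch_value_def expect by simp
    also have "\<dots> \<le> real A ^ m / real N"
      using sumle Npos by (intro divide_right_mono) auto
    also have "\<dots> = real A powr (real m - real (l - 1))"
      unfolding N_def using Ap by (simp add: powr_diff powr_realpow)
    also have "\<dots> \<le> real A powr (1 - real l / 2)"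
      using assms m2 by (intro powr_mono) auto
    finally show ?thesis .
  qed
  define lp :: "nat \<Rightarrow> nat \<Rightarrow> info list \<Rightarrow> nat" where
    "lp = (\<lambda>h s Is. ((SOME k. (Is ! 1) l k 0 = Some 1) div A ^ (l - 1 - h)) mod A)"
  have lpA: "\<forall>h s I. lp h s I < A" using assms by (simp add: lp_def)
  have look: "look_value A H P D 0 l lp > 1 / 2"
  proof -
    have kreach: "k div A ^ (l - 1 - j) \<in> reach A P 1 0 j" if "k < N" "j \<le> l - 1" for k j
      using that(2)
    proof (induction j)
      case 0
      then show ?case using that(1) by (simp add: N_def)
    next
      case (Suc j)
      have "k div A ^ (l - 1 - j) \<in> reach A P 1 0 j" using Suc by simp
      moreover have "k div A ^ (l - 1 - j) * A + k div A ^ (l - 1 - Suc j) mod A = k div A ^ (l - 1 - Suc j)"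
        using div_step[of k A "l - 1 - Suc j"] Suc.prems by (simp add: Suc_diff_Suc)
      moreover have "k div A ^ (l - 1 - Suc j) < N"
        using that(1) unfolding N_def by (meson div_le_dividend le_less_trans)
      moreover have "k div A ^ (l - 1 - Suc j) mod A < A" using assms by simp
      ultimately have "P (1 + j) (k div A ^ (l - 1 - j)) (k div A ^ (l - 1 - Suc j) mod A) = k div A ^ (l - 1 - Suc j)"
        and "k div A ^ (l - 1 - j) \<in> reach A P 1 0 j" "k div A ^ (l - 1 - Suc j) mod A < A"
        using Suc.prems unfolding P_def by auto
      then show ?case by (simp only: reach.simps) (metis (mono_tags, lifting) mem_Collect_eq)
    qed
    have one: "cum_reward H P 0 (look_rule A H P l lp (W k)) (W k) = 1" if kN: "k < N" for k
    proof -
      let ?d = "look_rule A H P l lp (W k)"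
      have kr: "k \<in> reach A P 1 0 (l - 1)" using kreach[OF kN, of "l - 1"] by simp
      have t1: "traj 0 ?d P 1 ! 1 = 0" using traj_nth_Suc[of 0 ?d P 0] by (simp add: P_def)
      have nthT: "traj 0 ?d P h ! j = traj 0 ?d P j ! j" if "j \<le> h" for h j
        using that
      proof (induction h)
        case 0 then show ?case by simp
      next
        case (Suc h)
        then show ?case
          by (cases "j = Suc h") (auto simp: nth_append le_Suc_eq)
      qed
      have key: "(SOME k'. lookahead_info A H P 1 0 l (W k) l k' 0 = Some 1) = k"
      proof (rule some_equality)
        show "lookahead_info A H P 1 0 l (W k) l k 0 = Some 1"
          using kr lH assms by (simp add: lookahead_info_def W_def)
      next
        fix k' assume "lookahead_info A H P 1 0 l (W k) l k' 0 = Some 1"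
        then show "k' = k" by (auto simp: lookahead_info_def W_def split: if_splits)
      qed
      have act: "?d h (traj 0 ?d P h) = (k div A ^ (l - 1 - h)) mod A" if "1 \<le> h" for h
      proof -
        have "map (\<lambda>t. lookahead_info A H P t (traj 0 ?d P h ! t) l (W k)) [0..<Suc h] ! 1
              = lookahead_info A H P 1 (traj 0 ?d P h ! 1) l (W k)"
          using that by (simp del: upt_Suc)
        also have "traj 0 ?d P h ! 1 = 0" using nthT[OF that] t1 by simp
        finally show ?thesis unfolding look_rule_def lp_def using key by simp
      qed
      have st: "traj 0 ?d P h ! h = k div A ^ (l - h)" if "1 \<le> h" "h \<le> l" for h
        using that
      proof (induction h rule: dec_induct)
        case base
        then show ?case using t1 kN by (simp add: N_def)
      next
        case (step h)
        have e: "k div A ^ (l - h) * A + k div A ^ (l - 1 - h) mod A = k div A ^ (l - 1 - h)"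
          using div_step[of k A "l - 1 - h"] step by (simp add: Suc_diff_Suc)
        have lt: "k div A ^ (l - 1 - h) < N"
          using kN unfolding N_def by (meson div_le_dividend le_less_trans)
        have "traj 0 ?d P (Suc h) ! Suc h = P h (k div A ^ (l - h)) ((k div A ^ (l - 1 - h)) mod A)"
          using traj_nth_Suc[of 0 ?d P h] step act[OF step(1)] by simp
        also have "\<dots> = k div A ^ (l - 1 - h)" using e lt step unfolding P_def by auto
        finally have "traj 0 ?d P (Suc h) ! Suc h = k div A ^ (l - 1 - h)" .
        moreover have "l - 1 - h = l - Suc h" by simp
        ultimately show ?case by metis
      qed
      have "traj 0 ?d P l ! l = k" using st[of l] assms by simp
      then show ?thesis using cum by simp
    qed
    have "look_value A H P D 0 l lp = (\<Sum>k<N. cum_reward H P 0 (look_rule A H P l lp (W k)) (W k)) / real N"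
      unfolding look_value_def expect by simp
    also have "\<dots> = 1" using one Npos by simp
    finally show ?thesis by simp
  qed
  have Sle: "N \<le> 1 + A ^ l"
  proof -
    have "A ^ (l - 1) \<le> A ^ l" using assms by (intro power_increasing) auto
    then show ?thesis unfolding N_def by simp
  qed
  show ?thesis
    apply (rule exI[of _ N], rule exI[of _ P], rule exI[of _ D], rule exI[of _ 0])
    using mdp batch look lpA Npos Sle by auto
qed

end
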